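(* Let $\mathcal{C}$ be a closed assembler and $\mathcal{D}$ a subassembler which is a sieve in $\mathcal{C}$, and suppose that $\mathcal{C}$ has complements for all objects of $\mathcal{D}$. Let $\{f_i:A_i\to B\}_{i\in I}$ be a finite collection of morphisms in $\mathcal{C}$ such that $A_i\times_BA_{i'}\in\mathcal{D}$ for all $i\neq i'$. Then there exists a morphism $g:\{Z_k\}_{k\in K}\to\{A_i\}_{i\in I}$ in $\mathcal{W}(\mathcal{C})$ such that for all $k\neq k'$ in $K$ the morphisms $f_{g(k)}g_k$ and $f_{g(k')}g_{k'}$ are either equal or disjoint, and if they are equal then $g(k)\neq g(k')$.
   Context: An assembler is a small category with a Grothendieck topology satisfying: (I) there is an initial object $\varnothing$ covered by the empty family; (R) any two finite disjoint covering families of an object have a common refinement which is a finite disjoint covering family; (M) all morphisms are monomorphisms. Maps $A\to C$, $B\to C$ are disjoint if $A\times_CB$ exists and is initial. An assembler is closed if it has all pullbacks. A subassembler is a subcategory which is an assembler and whose inclusion is continuous and preserves the initial object and disjointness. A sieve is a full subcategory $\mathcal{D}$ such that whenever $A\to B$ is a morphism with $B\in\mathcal{D}$ then $A\in\mathcal{D}$. $\mathcal{C}$ has complements for $A$ if every morphism $A\to B$ belongs to a finite disjoint covering family of $B$. $\mathcal{W}(\mathcal{C})$ is the category whose objects are finite families $\{A_i\}_{i\in I}$ of noninitial objects, and whose morphisms $\{Z_k\}_{k\in K}\to\{A_i\}_{i\in I}$ are a map $g:K\to I$ with morphisms $g_k:Z_k\to A_{g(k)}$ such that for each $i$, $\{g_k\}_{k\in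 g^{-1}(i)}$ is a finite disjoint covering family of $A_i$. *)

theory Defs
  imports Main
begin

text \<open>A small category: a set of objects, a set of morphisms, domain/codomain,
identities and composition (Comp g f is g after f).\<close>

record ('o, 'm) cat =
  Ob :: "'o set"
  Mor :: "'m set"
  Dom :: "'m \<Rightarrow> 'o"
  Cod :: "'m \<Rightarrow> 'o"
  Id :: "'o \<Rightarrow> 'm"
  Comp :: "'m \<Rightarrow> 'm \<Rightarrow> 'm"

definition hom :: "('o, 'm) cat \<Rightarrow> 'o \<Rightarrow> 'o \<Rightarrow> 'm set" where
  "hom C X Y = {f \<in> Mor C. Dom C f = X \<and> Cod C f = Y}"

definition is_category :: "('o, 'm) cat \<Rightarrow> bool" where
  "is_category C \<longleftrightarrow>
     (\<forall>f \<in> Mor C. Dom C f \<in> Ob C \<and> Cod C f \<in> Ob C) \<and>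
     (\<forall>X \<in> Ob C. Id C X \<in> hom C X X) \<and>
     (\<forall>f \<in> Mor C. \<forall>g \<in> Mor C. Cod C f = Dom C g \<longrightarrow>
         Comp C g f \<in> hom C (Dom C f) (Cod C g)) \<and>
     (\<forall>f \<in> Mor C. Comp C f (Id C (Dom C f)) = f \<and> Comp C (Id C (Cod C f)) f = f) \<and>
     (\<forall>f \<in> Mor C. \<forall>g \<in> Mor C. \<forall>h \<in> Mor C. Cod C f = Dom C g \<longrightarrow> Cod C g = Dom C h \<longrightarrow>
         Comp C h (Comp C g f) = Comp C (Comp C h g) f)"

definition is_mono :: "('o, 'm) cat \<Rightarrow> 'm \<Rightarrow> bool" where
  "is_mono C f \<longleftrightarrow> (\<forall>g \<in> Mor C. \<forall>h \<in> Mor C.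
      Cod C g = Dom C f \<longrightarrow> Cod C h = Dom C f \<longrightarrow> Dom C g = Dom C h \<longrightarrow>
      Comp C f g = Comp C f h \<longrightarrow> g = h)"

definition initial :: "('o, 'm) cat \<Rightarrow> 'o \<Rightarrow> bool" where
  "initial C X \<longleftrightarrow> X \<in> Ob C \<and> (\<forall>Y \<in> Ob C. \<exists>!f. f \<in> hom C X Y)"

definition is_pullback :: "('o, 'm) cat \<Rightarrow> 'm \<Rightarrow> 'm \<Rightarrow> 'o \<Rightarrow> 'm \<Rightarrow> 'm \<Rightarrow> bool" where
  "is_pullback C f g P p q \<longleftrightarrow>
     f \<in> Mor C \<and> g \<in> Mor C \<and> Cod C f = Cod C g \<and> P \<in> Ob C \<and>
     p \<in> hom C P (Dom C f) \<and> q \<in> hom C P (Dom C g) \<and>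
     Comp C f p = Comp C g q \<and>
     (\<forall>W r s. r \<in> hom C W (Dom C f) \<longrightarrow> s \<in> hom C W (Dom C g) \<longrightarrow>
        Comp C f r = Comp C g s \<longrightarrow>
        (\<exists>!u. u \<in> hom C W P \<and> Comp C p u = r \<and> Comp C q u = s))"

definition disjoint :: "('o, 'm) cat \<Rightarrow> 'm \<Rightarrow> 'm \<Rightarrow> bool" where
  "disjoint C f g \<longleftrightarrow> (\<exists>P p q. is_pullback C f g P p q \<and> initial C P)"

definition closed_cat :: "('o, 'm) cat \<Rightarrow> bool" where
  "closed_cat C \<longleftrightarrow> (\<forall>f \<in> Mor C. \<forall>g \<in> Mor C. Cod C f = Cod C g \<longrightarrow>
      (\<exists>P p q. is_pullback C f g P p q))"

definition sieve_on :: "('o, 'm) cat \<Rightarrow> 'o \<Rightarrow> 'm set \<Rightarrow> bool" where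
  "sieve_on C B S \<longleftrightarrow> S \<subseteq> Mor C \<and> (\<forall>f \<in> S. Cod C f = B) \<and>
     (\<forall>f \<in> S. \<forall>h \<in> Mor C. Cod C h = Dom C f \<longrightarrow> Comp C f h \<in> S)"

definition max_sieve :: "('o, 'm) cat \<Rightarrow> 'o \<Rightarrow> 'm set" where
  "max_sieve C B = {f \<in> Mor C. Cod C f = B}"

definition pullback_sieve :: "('o, 'm) cat \<Rightarrow> 'm \<Rightarrow> 'm set \<Rightarrow> 'm set" where
  "pullback_sieve C h S = {g \<in> Mor C. Cod C g = Dom C h \<and> Comp C h g \<in> S}"

definition grothendieck_topology :: "('o, 'm) cat \<Rightarrow> ('o \<Rightarrow> 'm set set) \<Rightarrow> bool" where
  "grothendieck_topology C J \<longleftrightarrow>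
     (\<forall>B \<in> Ob C. \<forall>S \<in> J B. sieve_on C B S) \<and>
     (\<forall>B \<in> Ob C. max_sieve C B \<in> J B) \<and>
     (\<forall>B \<in> Ob C. \<forall>S \<in> J B. \<forall>h \<in> Mor C. Cod C h = B \<longrightarrow> pullback_sieve C h S \<in> J (Dom C h)) \<and>
     (\<forall>B \<in> Ob C. \<forall>S \<in> J B. \<forall>R. sieve_on C B R \<longrightarrow>
        (\<forall>f \<in> S. pullback_sieve C f R \<in> J (Dom C f)) \<longrightarrow> R \<in> J B)"

definition gen_sieve :: "('o, 'm) cat \<Rightarrow> 'm set \<Rightarrow> 'm set" where
  "gen_sieve C F = {Comp C f h | f h. f \<in> F \<and> h \<in> Mor C \<and> Cod C h = Dom C f}"

definition covering_family :: "('o, 'm) cat \<Rightarrow> ('o \<Rightarrow> 'm set set) \<Rightarrow> 'o \<Rightarrow> 'i set \<Rightarrow> ('i \<Rightarrow> 'm) \<Rightarrow> bool" where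
  "covering_family C J B I f \<longleftrightarrow>
     (\<forall>i \<in> I. f i \<in> Mor C \<and> Cod C (f i) = B) \<and> gen_sieve C (f ` I) \<in> J B"

definition fdcf :: "('o, 'm) cat \<Rightarrow> ('o \<Rightarrow> 'm set set) \<Rightarrow> 'o \<Rightarrow> 'i set \<Rightarrow> ('i \<Rightarrow> 'm) \<Rightarrow> bool" where
  "fdcf C J B I f \<longleftrightarrow> finite I \<and> covering_family C J B I f \<and>
     (\<forall>i \<in> I. \<forall>j \<in> I. i \<noteq> j \<longrightarrow> disjoint C (f i) (f j))"

definition refines :: "('o, 'm) cat \<Rightarrow> 'k set \<Rightarrow> ('k \<Rightarrow> 'm) \<Rightarrow> 'i set \<Rightarrow> ('i \<Rightarrow> 'm) \<Rightarrow> bool" where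
  "refines C K h I f \<longleftrightarrow> (\<forall>k \<in> K. \<exists>i \<in> I. \<exists>u \<in> Mor C.
      Cod C u = Dom C (f i) \<and> h k = Comp C (f i) u)"

definition assembler :: "('o, 'm) cat \<Rightarrow> ('o \<Rightarrow> 'm set set) \<Rightarrow> bool" where
  "assembler C J \<longleftrightarrow> is_category C \<and> grothendieck_topology C J \<and>
     \<comment> \<open>(I)\<close>
     (\<exists>E. initial C E \<and> covering_family C J E ({} :: nat set) (\<lambda>_. undefined)) \<and>
     \<comment> \<open>(R)\<close>
     (\<forall>B \<in> Ob C. \<forall>(I1 :: nat set) f1 (I2 :: nat set) f2.
        fdcf C J B I1 f1 \<longrightarrow> fdcf C J B I2 f2 \<longrightarrow>
        (\<exists>(K :: nat set) h. fdcf C J B K h \<and> refines C K h I1 f1 \<and> refines C K h I2 f2)) \<and>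
     \<comment> \<open>(M)\<close>
     (\<forall>f \<in> Mor C. is_mono C f)"

definition closed_assembler :: "('o, 'm) cat \<Rightarrow> ('o \<Rightarrow> 'm set set) \<Rightarrow> bool" where
  "closed_assembler C J \<longleftrightarrow> assembler C J \<and> closed_cat C"

definition full_sub :: "('o, 'm) cat \<Rightarrow> 'o set \<Rightarrow> ('o, 'm) cat" where
  "full_sub C D = C\<lparr> Ob := D, Mor := {f \<in> Mor C. Dom C f \<in> D \<and> Cod C f \<in> D} \<rparr>"

definition is_sieve :: "('o, 'm) cat \<Rightarrow> 'o set \<Rightarrow> bool" where
  "is_sieve C D \<longleftrightarrow> D \<subseteq> Ob C \<and> (\<forall>h \<in> Mor C. Cod C h \<in> D \<longrightarrow> Dom C h \<in> D)"

definition subassembler :: "('o, 'm) cat \<Rightarrow> ('o \<Rightarrow> 'm set set) \<Rightarrow> 'o set \<Rightarrow> ('o \<Rightarrow> 'm set set) \<Rightarrow> bool" where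
  "subassembler C J D JD \<longleftrightarrow> D \<subseteq> Ob C \<and> assembler (full_sub C D) JD \<and>
     (\<forall>B \<in> D. \<forall>F. F \<subseteq> Mor (full_sub C D) \<longrightarrow> (\<forall>f \<in> F. Cod C f = B) \<longrightarrow>
        gen_sieve (full_sub C D) F \<in> JD B \<longrightarrow> gen_sieve C F \<in> J B) \<and>
     (\<forall>X. initial (full_sub C D) X \<longrightarrow> initial C X) \<and>
     (\<forall>f \<in> Mor (full_sub C D). \<forall>g \<in> Mor (full_sub C D).
        disjoint (full_sub C D) f g \<longrightarrow> disjoint C f g)"

definition has_complements_for :: "('o, 'm) cat \<Rightarrow> ('o \<Rightarrow> 'm set set) \<Rightarrow> 'o \<Rightarrow> bool" where
  "has_complements_for C J A \<longleftrightarrow> (\<forall>f \<in> Mor C. Dom C f = A \<longrightarrow>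
      (\<exists>(I :: nat set) h. fdcf C J (Cod C f) I h \<and> (\<exists>i \<in> I. h i = f)))"

definition W_obj :: "('o, 'm) cat \<Rightarrow> 'i set \<Rightarrow> ('i \<Rightarrow> 'o) \<Rightarrow> bool" where
  "W_obj C I A \<longleftrightarrow> finite I \<and> (\<forall>i \<in> I. A i \<in> Ob C \<and> \<not> initial C (A i))"

text \<open>A morphism \<open>{Z_k}_{k\<in>K} \<rightarrow> {A_i}_{i\<in>I}\<close> in W(C), given by g : K \<rightarrow> I and gm k : Z k \<rightarrow> A (g k).\<close>

definition W_hom :: "('o, 'm) cat \<Rightarrow> ('o \<Rightarrow> 'm set set) \<Rightarrow> 'k set \<Rightarrow> ('k \<Rightarrow> 'o) \<Rightarrow>
    'i set \<Rightarrow> ('i \<Rightarrow> 'o) \<Rightarrow> ('k \<Rightarrow> 'i) \<Rightarrow> ('k \<Rightarrow> 'm) \<Rightarrow> bool" where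
  "W_hom C J K Z I A g gm \<longleftrightarrow> W_obj C K Z \<and> W_obj C I A \<and>
     (\<forall>k \<in> K. g k \<in> I \<and> gm k \<in> hom C (Z k) (A (g k))) \<and>
     (\<forall>i \<in> I. fdcf C J (A i) {k \<in> K. g k = i} gm)"

end

theory Submission
  imports Defs
begin

locale CA =
  fixes C :: "('o, 'm) cat" and J :: "'o \<Rightarrow> 'm set set"
  assumes ca: "closed_assembler C J"
begin

lemma cat: "is_category C" using ca by (simp add: closed_assembler_def assembler_def)
lemma gt: "grothendieck_topology C J" using ca by (simp add: closed_assembler_def assembler_def)
lemma closed: "closed_cat C" using ca by (simp add: closed_assembler_def)
lemma monoM: "f \<in> Mor C \<Longrightarrow> is_mono C f" using ca by (simp add: closed_assembler_def assembler_def)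

lemma dc: "f \<in> Mor C \<Longrightarrow> Dom C f \<in> Ob C \<and> Cod C f \<in> Ob C"
  using cat by (simp add: is_category_def)

lemma idh: "X \<in> Ob C \<Longrightarrow> Id C X \<in> Mor C \<and> Dom C (Id C X) = X \<and> Cod C (Id C X) = X"
  using cat by (simp add: is_category_def hom_def)

lemma cm: "f \<in> Mor C \<Longrightarrow> g \<in> Mor C \<Longrightarrow> Cod C f = Dom C g \<Longrightarrow>
   Comp C g f \<in> Mor C \<and> Dom C (Comp C g f) = Dom C f \<and> Cod C (Comp C g f) = Cod C g"
  using cat by (simp add: is_category_def hom_def)

lemma idr: "f \<in> Mor C \<Longrightarrow> Comp C f (Id C (Dom C f)) = f"
  using cat by (simp add: is_category_def)
lemma idl: "f \<in> Mor C \<Longrightarrow> Comp C (Id C (Cod C f)) f = f"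
  using cat by (simp add: is_category_def)

lemma assoc: "f \<in> Mor C \<Longrightarrow> g \<in> Mor C \<Longrightarrow> h \<in> Mor C \<Longrightarrow> Cod C f = Dom C g \<Longrightarrow> Cod C g = Dom C h \<Longrightarrow>
   Comp C h (Comp C g f) = Comp C (Comp C h g) f"
proof -
  have "\<forall>f \<in> Mor C. \<forall>g \<in> Mor C. \<forall>h \<in> Mor C. Cod C f = Dom C g \<longrightarrow> Cod C g = Dom C h \<longrightarrow>
         Comp C h (Comp C g f) = Comp C (Comp C h g) f" using cat unfolding is_category_def by (elim conjE)
  then show "f \<in> Mor C \<Longrightarrow> g \<in> Mor C \<Longrightarrow> h \<in> Mor C \<Longrightarrow> Cod C f = Dom C g \<Longrightarrow> Cod C g = Dom C h \<Longrightarrow>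
   Comp C h (Comp C g f) = Comp C (Comp C h g) f" by blast
qed

lemma mono: "f \<in> Mor C \<Longrightarrow> g \<in> Mor C \<Longrightarrow> h \<in> Mor C \<Longrightarrow> Cod C g = Dom C f \<Longrightarrow> Cod C h = Dom C f \<Longrightarrow>
   Comp C f g = Comp C f h \<Longrightarrow> g = h"
proof -
  assume a: "f \<in> Mor C" "g \<in> Mor C" "h \<in> Mor C" "Cod C g = Dom C f" "Cod C h = Dom C f" "Comp C f g = Comp C f h"
  have "Dom C (Comp C f g) = Dom C g" using cm[of g f] a by simp
  moreover have "Dom C (Comp C f h) = Dom C h" using cm[of h f] a by simp
  ultimately have "Dom C g = Dom C h" using a(6) by simp
  then show ?thesis using monoM[OF a(1)] a unfolding is_mono_def by blast
qed

lemma init_uniq: assumes E: "initial C E" and a: "a \<in> hom C E Y" and b: "b \<in> hom C E Y" shows "a = b"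
proof -
  have Y: "Y \<in> Ob C" using a dc unfolding hom_def by blast
  have "\<exists>!f. f \<in> hom C E Y" using E Y unfolding initial_def by blast
  then show ?thesis using a b by blast
qed

lemma init_ex: assumes E: "initial C E" and Y: "Y \<in> Ob C" obtains a where "a \<in> hom C E Y"
proof -
  have "\<exists>!f. f \<in> hom C E Y" using E Y unfolding initial_def by blast
  then show ?thesis using that by blast
qed

lemma initialI: assumes X: "X \<in> Ob C" and ex: "\<And>Y. Y \<in> Ob C \<Longrightarrow> \<exists>f. f \<in> hom C X Y"
  and un: "\<And>Y a b. a \<in> hom C X Y \<Longrightarrow> b \<in> hom C X Y \<Longrightarrow> a = b" shows "initial C X"
  unfolding initial_def using X ex un by blast

lemma init_dom: assumes E: "initial C E" and m: "m \<in> Mor C" "Cod C m = E"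
  shows "initial C (Dom C m)"
proof -
  let ?X = "Dom C m"
  have XO: "?X \<in> Ob C" using dc m by blast
  have EO: "E \<in> Ob C" using E unfolding initial_def by blast
  obtain i where i: "i \<in> hom C E ?X" using init_ex[OF E XO] by blast
  have iM: "i \<in> Mor C" "Dom C i = E" "Cod C i = ?X" using i unfolding hom_def by blast+
  have mi0: "Comp C m i \<in> Mor C \<and> Dom C (Comp C m i) = Dom C i \<and> Cod C (Comp C m i) = Cod C m"
    by (rule cm[OF iM(1) m(1) iM(3)])
  have mi: "Comp C m i \<in> hom C E E" using mi0 iM(2) m(2) unfolding hom_def by simp
  have "Id C E \<in> hom C E E" using idh[OF EO] unfolding hom_def by simp
  then have mi1: "Comp C m i = Id C E" using init_uniq[OF E mi] by blast
  have "Comp C m (Comp C i m) = Comp C (Comp C m i) m" by (rule assoc[OF m(1) iM(1) m(1)]) (use iM m in simp_all)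
  also have "\<dots> = Comp C (Id C (Cod C m)) m" using mi1 m(2) by simp
  also have "\<dots> = m" by (rule idl[OF m(1)])
  also have "\<dots> = Comp C m (Id C ?X)" using idr[OF m(1)] by simp
  finally have eq: "Comp C m (Comp C i m) = Comp C m (Id C ?X)" .
  have im0: "Comp C i m \<in> Mor C \<and> Dom C (Comp C i m) = Dom C m \<and> Cod C (Comp C i m) = Cod C i"
    by (rule cm[OF m(1) iM(1)]) (use iM m in simp)
  have im: "Comp C i m = Id C ?X"
    by (rule mono[OF m(1) _ _ _ _ eq]) (use im0 iM idh[OF XO] in simp_all)
  show ?thesis
  proof (rule initialI[OF XO])
    fix Y assume Y: "Y \<in> Ob C"
    obtain t where t: "t \<in> hom C E Y" using init_ex[OF E Y] by blast
    have tM: "t \<in> Mor C" "Dom C t = E" "Cod C t = Y" using t unfolding hom_def by blast+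
    have "Comp C t m \<in> Mor C \<and> Dom C (Comp C t m) = Dom C m \<and> Cod C (Comp C t m) = Cod C t"
      by (rule cm[OF m(1) tM(1)]) (use tM m in simp)
    then show "\<exists>f. f \<in> hom C ?X Y" using tM unfolding hom_def by blast
  next
    fix Y a b assume a: "a \<in> hom C ?X Y" and b: "b \<in> hom C ?X Y"
    have red: "c = Comp C (Comp C c i) m" if c: "c \<in> hom C ?X Y" for c
    proof -
      have cM: "c \<in> Mor C" "Dom C c = ?X" "Cod C c = Y" using c unfolding hom_def by blast+
      have "c = Comp C c (Id C ?X)" using idr[OF cM(1)] cM(2) by simp
      also have "\<dots> = Comp C c (Comp C i m)" using im by simp
      also have "\<dots> = Comp C (Comp C c i) m" by (rule assoc[OF m(1) iM(1) cM(1)]) (use iM cM m in simp_all)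
      finally show ?thesis .
    qed
    have ch: "Comp C c i \<in> hom C E Y" if c: "c \<in> hom C ?X Y" for c
    proof -
      have cM: "c \<in> Mor C" "Dom C c = ?X" "Cod C c = Y" using c unfolding hom_def by blast+
      have "Comp C c i \<in> Mor C \<and> Dom C (Comp C c i) = Dom C i \<and> Cod C (Comp C c i) = Cod C c"
        by (rule cm[OF iM(1) cM(1)]) (use iM cM in simp)
      then show ?thesis using iM cM unfolding hom_def by simp
    qed
    have "Comp C a i = Comp C b i" using init_uniq[OF E ch[OF a] ch[OF b]] .
    then show "a = b" using red[OF a] red[OF b] by simp
  qed
qed

lemma gts: "(\<forall>B \<in> Ob C. \<forall>S \<in> J B. sieve_on C B S) \<and>
     (\<forall>B \<in> Ob C. max_sieve C B \<in> J B) \<and>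
     (\<forall>B \<in> Ob C. \<forall>S \<in> J B. \<forall>h \<in> Mor C. Cod C h = B \<longrightarrow> pullback_sieve C h S \<in> J (Dom C h))"
  using gt unfolding grothendieck_topology_def by (elim conjE) (intro conjI)
lemma gt1: "S \<in> J B \<Longrightarrow> B \<in> Ob C \<Longrightarrow> sieve_on C B S"
  using gts by blast
lemma gt2: "B \<in> Ob C \<Longrightarrow> max_sieve C B \<in> J B"
  using gts by blast
lemma gt3: "B \<in> Ob C \<Longrightarrow> S \<in> J B \<Longrightarrow> h \<in> Mor C \<Longrightarrow> Cod C h = B \<Longrightarrow> pullback_sieve C h S \<in> J (Dom C h)"
  using gts by blast
lemma gt4: "B \<in> Ob C \<Longrightarrow> S \<in> J B \<Longrightarrow> sieve_on C B R \<Longrightarrow>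
   (\<And>f. f \<in> S \<Longrightarrow> pullback_sieve C f R \<in> J (Dom C f)) \<Longrightarrow> R \<in> J B"
proof -
  have "\<forall>B \<in> Ob C. \<forall>S \<in> J B. \<forall>R. sieve_on C B R \<longrightarrow>
        (\<forall>f \<in> S. pullback_sieve C f R \<in> J (Dom C f)) \<longrightarrow> R \<in> J B"
    using gt unfolding grothendieck_topology_def by (elim conjE)
  then show "B \<in> Ob C \<Longrightarrow> S \<in> J B \<Longrightarrow> sieve_on C B R \<Longrightarrow>
   (\<And>f. f \<in> S \<Longrightarrow> pullback_sieve C f R \<in> J (Dom C f)) \<Longrightarrow> R \<in> J B" by blast
qed

lemma sv_cl: "sieve_on C B R \<Longrightarrow> f \<in> R \<Longrightarrow> k \<in> Mor C \<Longrightarrow> Cod C k = Dom C f \<Longrightarrow> Comp C f k \<in> R"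
  unfolding sieve_on_def by blast
lemma sv_mor: "sieve_on C B R \<Longrightarrow> f \<in> R \<Longrightarrow> f \<in> Mor C \<and> Cod C f = B"
  unfolding sieve_on_def by blast
lemma pbs_mem: "g \<in> pullback_sieve C h R \<longleftrightarrow> g \<in> Mor C \<and> Cod C g = Dom C h \<and> Comp C h g \<in> R"
  unfolding pullback_sieve_def by (rule mem_Collect_eq)

lemma pbs_sieve: assumes R: "sieve_on C B R" and h: "h \<in> Mor C" "Cod C h = B"
  shows "sieve_on C (Dom C h) (pullback_sieve C h R)"
proof -
  have A: "pullback_sieve C h R \<subseteq> Mor C" using pbs_mem by blast
  have B: "\<forall>f \<in> pullback_sieve C h R. Cod C f = Dom C h" using pbs_mem by blast
  have Cl: "Comp C f k \<in> pullback_sieve C h R" if f: "f \<in> pullback_sieve C h R" and k: "k \<in> Mor C" "Cod C k = Dom C f" for f k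
  proof -
    have f1: "f \<in> Mor C" "Cod C f = Dom C h" "Comp C h f \<in> R" using f pbs_mem by blast+
    have fk: "Comp C f k \<in> Mor C \<and> Dom C (Comp C f k) = Dom C k \<and> Cod C (Comp C f k) = Cod C f"
      by (rule cm[OF k(1) f1(1) k(2)])
    have hf: "Comp C h f \<in> Mor C \<and> Dom C (Comp C h f) = Dom C f \<and> Cod C (Comp C h f) = Cod C h"
      by (rule cm[OF f1(1) h(1) f1(2)])
    have as: "Comp C h (Comp C f k) = Comp C (Comp C h f) k" by (rule assoc[OF k(1) f1(1) h(1) k(2) f1(2)])
    have k2: "Cod C k = Dom C (Comp C h f)" using hf k(2) by metis
    have "Comp C (Comp C h f) k \<in> R" by (rule sv_cl[OF R f1(3) k(1) k2])
    then have "Comp C h (Comp C f k) \<in> R" using as by metis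
    moreover have "Cod C (Comp C f k) = Dom C h" using fk f1(2) by metis
    ultimately show ?thesis using fk pbs_mem by blast
  qed
  show ?thesis unfolding sieve_on_def using A B Cl by blast
qed

lemma pbs_max: assumes R: "sieve_on C B R" and h: "h \<in> R"
  shows "pullback_sieve C h R = max_sieve C (Dom C h)"
proof -
  have "g \<in> pullback_sieve C h R" if g: "g \<in> Mor C" "Cod C g = Dom C h" for g
    using sv_cl[OF R h g] g pbs_mem by blast
  then show ?thesis unfolding max_sieve_def using pbs_mem by blast
qed

lemma up: assumes X: "X \<in> Ob C" and S: "S \<in> J X" and R: "sieve_on C X R" and sub: "S \<subseteq> R"
  shows "R \<in> J X"
proof (rule gt4[OF X S R])
  fix f assume f: "f \<in> S"
  have fM: "f \<in> Mor C" using sv_mor[OF gt1[OF S X]] f by blast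
  have "f \<in> R" using f sub by blast
  then have "pullback_sieve C f R = max_sieve C (Dom C f)" by (rule pbs_max[OF R])
  moreover have "Dom C f \<in> Ob C" using dc[OF fM] by blast
  ultimately show "pullback_sieve C f R \<in> J (Dom C f)" using gt2 by metis
qed

lemma gen_empty: "gen_sieve C {} = {}" by (simp add: gen_sieve_def)

lemma empty_init: assumes Y: "initial C Y" shows "{} \<in> J Y"
proof -
  have "\<exists>E. initial C E \<and> covering_family C J E ({} :: nat set) (\<lambda>_. undefined)"
    using ca unfolding closed_assembler_def assembler_def by (elim conjE)
  then obtain E where E: "initial C E" "covering_family C J E ({} :: nat set) (\<lambda>_. undefined)"
    by blast
  have "gen_sieve C ((\<lambda>_. undefined) ` ({}::nat set)) \<in> J E" using E(2) unfolding covering_family_def by blast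
  then have EJ: "{} \<in> J E" using gen_empty by simp
  have YO: "Y \<in> Ob C" "E \<in> Ob C" using Y E(1) unfolding initial_def by blast+
  obtain h where h: "h \<in> hom C Y E" using Y YO unfolding initial_def by blast
  have h1: "h \<in> Mor C" "Cod C h = E" "Dom C h = Y" using h unfolding hom_def by blast+
  have "pullback_sieve C h {} \<in> J (Dom C h)" by (rule gt3[OF YO(2) EJ h1(1) h1(2)])
  moreover have "pullback_sieve C h {} = {}" by (simp add: pullback_sieve_def)
  ultimately show ?thesis using h1(3) by metis
qed

lemma init_cov: assumes Y: "initial C Y" and R: "sieve_on C Y R" shows "R \<in> J Y"
proof -
  have YO: "Y \<in> Ob C" using Y unfolding initial_def by blast
  show ?thesis by (rule up[OF YO empty_init[OF Y] R]) blast
qed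

lemma L1: assumes X: "X \<in> Ob C" and S: "S \<in> J X" and R: "sieve_on C X R"
  and H: "\<And>h. h \<in> S \<Longrightarrow> h \<in> R \<or> initial C (Dom C h)"
  shows "R \<in> J X"
proof (rule gt4[OF X S R])
  fix f assume f: "f \<in> S"
  have fM: "f \<in> Mor C \<and> Cod C f = X" using sv_mor[OF gt1[OF S X] f] .
  show "pullback_sieve C f R \<in> J (Dom C f)"
  proof (cases "f \<in> R")
    case True
    then have "pullback_sieve C f R = max_sieve C (Dom C f)" by (rule pbs_max[OF R])
    moreover have "Dom C f \<in> Ob C" using dc fM by blast
    ultimately show ?thesis using gt2 by metis
  next
    case False
    then have "initial C (Dom C f)" using H f by blast
    moreover have "sieve_on C (Dom C f) (pullback_sieve C f R)" using pbs_sieve[OF R] fM by blast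
    ultimately show ?thesis by (rule init_cov)
  qed
qed

lemma pbs_comp: assumes a: "a \<in> Mor C" and b: "b \<in> Mor C" "Cod C b = Dom C a"
  shows "pullback_sieve C (Comp C a b) R = pullback_sieve C b (pullback_sieve C a R)"
proof (rule set_eqI)
  fix g
  have ab: "Dom C (Comp C a b) = Dom C b" using cm[OF b(1) a b(2)] by simp
  show "g \<in> pullback_sieve C (Comp C a b) R \<longleftrightarrow> g \<in> pullback_sieve C b (pullback_sieve C a R)"
  proof (cases "g \<in> Mor C \<and> Cod C g = Dom C b")
    case True
    have e1: "Comp C (Comp C a b) g = Comp C a (Comp C b g)" using assoc[of g b a] a b True by simp
    have e2: "Comp C b g \<in> Mor C" "Cod C (Comp C b g) = Dom C a" using cm[of g b] True b by simp_all
    have "g \<in> pullback_sieve C (Comp C a b) R \<longleftrightarrow> Comp C a (Comp C b g) \<in> R"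
      unfolding pullback_sieve_def mem_Collect_eq e1 ab using True by blast
    moreover have "g \<in> pullback_sieve C b (pullback_sieve C a R) \<longleftrightarrow> Comp C a (Comp C b g) \<in> R"
      unfolding pullback_sieve_def mem_Collect_eq using True e2 by blast
    ultimately show ?thesis by blast
  next
    case False
    have "g \<notin> pullback_sieve C (Comp C a b) R" unfolding pullback_sieve_def mem_Collect_eq ab using False by blast
    moreover have "g \<notin> pullback_sieve C b (pullback_sieve C a R)" unfolding pullback_sieve_def mem_Collect_eq using False by blast
    ultimately show ?thesis by blast
  qed
qed

end


context CA begin

lemma homI: "f \<in> Mor C \<Longrightarrow> f \<in> hom C (Dom C f) (Cod C f)" unfolding hom_def by blast
lemma homD: "f \<in> hom C X Y \<Longrightarrow> f \<in> Mor C \<and> Dom C f = X \<and> Cod C f = Y" unfolding hom_def by blast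

lemma hcomp: assumes x: "x \<in> hom C X Y" and y: "y \<in> hom C Y Z" shows "Comp C y x \<in> hom C X Z"
proof -
  have x1: "x \<in> Mor C" "Dom C x = X" "Cod C x = Y" using homD[OF x] by blast+
  have y1: "y \<in> Mor C" "Dom C y = Y" "Cod C y = Z" using homD[OF y] by blast+
  have "Cod C x = Dom C y" using x1 y1 by simp
  from cm[OF x1(1) y1(1) this] show ?thesis using x1 y1 unfolding hom_def by simp
qed

lemma hassoc: assumes x: "x \<in> hom C W X" and y: "y \<in> hom C X Y" and z: "z \<in> hom C Y Z"
  shows "Comp C z (Comp C y x) = Comp C (Comp C z y) x"
proof -
  have x1: "x \<in> Mor C" "Dom C x = W" "Cod C x = X" using homD[OF x] by blast+
  have y1: "y \<in> Mor C" "Dom C y = X" "Cod C y = Y" using homD[OF y] by blast+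
  have z1: "z \<in> Mor C" "Dom C z = Y" "Cod C z = Z" using homD[OF z] by blast+
  show ?thesis by (rule assoc[OF x1(1) y1(1) z1(1)]) (simp_all add: x1 y1 z1)
qed

lemma hmono: assumes s: "s \<in> Mor C" and g: "g \<in> hom C X (Dom C s)" and h: "h \<in> hom C X' (Dom C s)"
  and e: "Comp C s g = Comp C s h" shows "g = h"
  using mono[OF s _ _ _ _ e] homD[OF g] homD[OF h] by blast

lemma hid: "X \<in> Ob C \<Longrightarrow> Id C X \<in> hom C X X" using idh unfolding hom_def by blast
lemma hidr: "f \<in> hom C X Y \<Longrightarrow> Comp C f (Id C X) = f" using idr homD by metis
lemma hidl: "f \<in> hom C X Y \<Longrightarrow> Comp C (Id C Y) f = f" using idl homD by metis
lemma hob: "f \<in> hom C X Y \<Longrightarrow> X \<in> Ob C \<and> Y \<in> Ob C" using dc homD by metis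

lemma gen_mem: "f \<in> F \<Longrightarrow> h \<in> Mor C \<Longrightarrow> Cod C h = Dom C f \<Longrightarrow> Comp C f h \<in> gen_sieve C F"
  unfolding gen_sieve_def by blast

lemma gen_memh: "f \<in> F \<Longrightarrow> h \<in> hom C W (Dom C f) \<Longrightarrow> Comp C f h \<in> gen_sieve C F"
  using gen_mem homD by blast

lemma gen_E: assumes "x \<in> gen_sieve C F"
  obtains f h where "x = Comp C f h" "f \<in> F" "h \<in> hom C (Dom C h) (Dom C f)"
  using assms unfolding gen_sieve_def hom_def by blast

lemma gen_sieve_sieve: assumes FM: "F \<subseteq> Mor C" and FX: "\<And>f. f \<in> F \<Longrightarrow> Cod C f = X"
  shows "sieve_on C X (gen_sieve C F)"
proof -
  have A: "x \<in> hom C (Dom C x) X" if xx: "x \<in> gen_sieve C F" for x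
  proof -
    obtain f h where fh: "x = Comp C f h" "f \<in> F" "h \<in> hom C (Dom C h) (Dom C f)"
      using xx by (rule gen_E)
    have "f \<in> hom C (Dom C f) X" using FM FX[OF fh(2)] fh(2) homI by blast
    then have "Comp C f h \<in> hom C (Dom C h) X" using hcomp fh(3) by blast
    then show ?thesis using fh(1) homD by metis
  qed
  have B: "Comp C x k \<in> gen_sieve C F" if x: "x \<in> gen_sieve C F" and k: "k \<in> Mor C" "Cod C k = Dom C x" for x k
  proof -
    obtain f h where fh: "x = Comp C f h" "f \<in> F" "h \<in> hom C (Dom C h) (Dom C f)"
      using x by (rule gen_E)
    have fh2: "f \<in> hom C (Dom C f) X" using FM FX[OF fh(2)] fh(2) homI by blast
    have dx: "Dom C x = Dom C h" using hcomp[OF fh(3) fh2] fh(1) homD by metis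
    have kh: "k \<in> hom C (Dom C k) (Dom C h)" using k dx unfolding hom_def by simp
    have "Comp C x k = Comp C f (Comp C h k)" using hassoc[OF kh fh(3) fh2] fh(1) by simp
    moreover have "Comp C h k \<in> hom C (Dom C k) (Dom C f)" using hcomp[OF kh fh(3)] .
    ultimately show ?thesis using gen_memh[OF fh(2)] by metis
  qed
  show ?thesis unfolding sieve_on_def
  proof (intro conjI ballI subsetI impI)
    fix x assume "x \<in> gen_sieve C F" then show "x \<in> Mor C" using A homD by blast
  next
    fix x assume "x \<in> gen_sieve C F" then show "Cod C x = X" using A homD by blast
  next
    fix x k assume "x \<in> gen_sieve C F" "k \<in> Mor C" "Cod C k = Dom C x"
    then show "Comp C x k \<in> gen_sieve C F" using B by blast
  qed
qed

lemma gen_self: assumes f: "f \<in> F" "f \<in> Mor C" shows "f \<in> gen_sieve C F"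
proof -
  have "Dom C f \<in> Ob C" using dc f(2) by blast
  then have "Comp C f (Id C (Dom C f)) \<in> gen_sieve C F" using gen_memh[OF f(1)] hid by blast
  then show ?thesis using idr[OF f(2)] by simp
qed

section \<open>Disjointness\<close>

lemma disj_mor: "disjoint C a b \<Longrightarrow> a \<in> Mor C \<and> b \<in> Mor C \<and> Cod C a = Cod C b"
  unfolding disjoint_def is_pullback_def by blast

lemma D_use: assumes d: "disjoint C a b" and x: "x \<in> hom C X (Dom C a)" and y: "y \<in> hom C X (Dom C b)"
  and e: "Comp C a x = Comp C b y" shows "initial C X"
proof -
  obtain P p q where P: "is_pullback C a b P p q" "initial C P" using d unfolding disjoint_def by blast
  have "\<exists>!u. u \<in> hom C X P \<and> Comp C p u = x \<and> Comp C q u = y"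
    using P(1) x y e unfolding is_pullback_def by blast
  then obtain u where u: "u \<in> hom C X P" by blast
  show ?thesis using init_dom[OF P(2)] homD[OF u] by metis
qed

lemma Dj: assumes a: "a \<in> Mor C" and b: "b \<in> Mor C" and ab: "Cod C a = Cod C b"
  and H: "\<And>X x y. x \<in> hom C X (Dom C a) \<Longrightarrow> y \<in> hom C X (Dom C b) \<Longrightarrow> Comp C a x = Comp C b y \<Longrightarrow> initial C X"
  shows "disjoint C a b"
proof -
  obtain P p q where P: "is_pullback C a b P p q" using closed a b ab unfolding closed_cat_def by blast
  have "p \<in> hom C P (Dom C a)" "q \<in> hom C P (Dom C b)" "Comp C a p = Comp C b q"
    using P unfolding is_pullback_def by blast+
  then have "initial C P" by (rule H)
  then show ?thesis using P unfolding disjoint_def by blast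
qed

lemma disj_sym: assumes d: "disjoint C a b" shows "disjoint C b a"
proof -
  have m: "a \<in> Mor C" "b \<in> Mor C" "Cod C a = Cod C b" using disj_mor[OF d] by blast+
  show ?thesis by (rule Dj) (use m D_use[OF d] in auto)
qed

lemma disj_comp: assumes d: "disjoint C a b" and c: "c \<in> hom C W (Dom C a)" and e: "e \<in> hom C W' (Dom C b)"
  shows "disjoint C (Comp C a c) (Comp C b e)"
proof -
  have m: "a \<in> Mor C" "b \<in> Mor C" "Cod C a = Cod C b" using disj_mor[OF d] by blast+
  have ac: "Comp C a c \<in> hom C W (Cod C a)" using hcomp[OF c homI[OF m(1)]] .
  have be: "Comp C b e \<in> hom C W' (Cod C a)" using hcomp[OF e homI[OF m(2)]] m(3) by simp
  show ?thesis
  proof (rule Dj)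
    show "Comp C a c \<in> Mor C" "Comp C b e \<in> Mor C" "Cod C (Comp C a c) = Cod C (Comp C b e)"
      using homD[OF ac] homD[OF be] by simp_all
  next
    fix X x y assume x: "x \<in> hom C X (Dom C (Comp C a c))" and y: "y \<in> hom C X (Dom C (Comp C b e))"
      and eq: "Comp C (Comp C a c) x = Comp C (Comp C b e) y"
    have x1: "x \<in> hom C X W" using x homD[OF ac] by simp
    have y1: "y \<in> hom C X W'" using y homD[OF be] by simp
    have "Comp C a (Comp C c x) = Comp C b (Comp C e y)"
      using eq hassoc[OF x1 c homI[OF m(1)]] hassoc[OF y1 e homI[OF m(2)]] by simp
    then show "initial C X" using D_use[OF d hcomp[OF x1 c] hcomp[OF y1 e]] by blast
  qed
qed

lemma disj_post: assumes d: "disjoint C c c'" and s: "s \<in> Mor C" and cs: "Cod C c = Dom C s"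
  shows "disjoint C (Comp C s c) (Comp C s c')"
proof -
  have m: "c \<in> Mor C" "c' \<in> Mor C" "Cod C c = Cod C c'" using disj_mor[OF d] by blast+
  have c1: "c \<in> hom C (Dom C c) (Dom C s)" using homI[OF m(1)] cs by simp
  have c2: "c' \<in> hom C (Dom C c') (Dom C s)" using homI[OF m(2)] cs m(3) by simp
  have sh: "s \<in> hom C (Dom C s) (Cod C s)" using homI[OF s] .
  have sc: "Comp C s c \<in> hom C (Dom C c) (Cod C s)" using hcomp[OF c1 sh] .
  have sc': "Comp C s c' \<in> hom C (Dom C c') (Cod C s)" using hcomp[OF c2 sh] .
  show ?thesis
  proof (rule Dj)
    show "Comp C s c \<in> Mor C" "Comp C s c' \<in> Mor C" "Cod C (Comp C s c) = Cod C (Comp C s c')"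
      using homD[OF sc] homD[OF sc'] by simp_all
  next
    fix X x y assume x: "x \<in> hom C X (Dom C (Comp C s c))" and y: "y \<in> hom C X (Dom C (Comp C s c'))"
      and eq: "Comp C (Comp C s c) x = Comp C (Comp C s c') y"
    have x1: "x \<in> hom C X (Dom C c)" using x homD[OF sc] by simp
    have y1: "y \<in> hom C X (Dom C c')" using y homD[OF sc'] by simp
    have "Comp C s (Comp C c x) = Comp C s (Comp C c' y)"
      using eq hassoc[OF x1 c1 sh] hassoc[OF y1 c2 sh] by simp
    then have "Comp C c x = Comp C c' y" using hmono[OF s hcomp[OF x1 c1] hcomp[OF y1 c2]] by blast
    then show "initial C X" using D_use[OF d x1 y1] by blast
  qed
qed

lemma disj_cancel: assumes d: "disjoint C (Comp C s u) (Comp C s u')" and s: "s \<in> Mor C"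
  and u: "u \<in> hom C W (Dom C s)" and u': "u' \<in> hom C W' (Dom C s)"
  shows "disjoint C u u'"
proof -
  have sh: "s \<in> hom C (Dom C s) (Cod C s)" using homI[OF s] .
  have su: "Comp C s u \<in> hom C W (Cod C s)" using hcomp[OF u sh] .
  have su': "Comp C s u' \<in> hom C W' (Cod C s)" using hcomp[OF u' sh] .
  show ?thesis
  proof (rule Dj)
    show "u \<in> Mor C" "u' \<in> Mor C" "Cod C u = Cod C u'" using homD[OF u] homD[OF u'] by simp_all
  next
    fix X x y assume x: "x \<in> hom C X (Dom C u)" and y: "y \<in> hom C X (Dom C u')"
      and eq: "Comp C u x = Comp C u' y"
    have x1: "x \<in> hom C X W" using x homD[OF u] by simp
    have y1: "y \<in> hom C X W'" using y homD[OF u'] by simp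
    have "Comp C (Comp C s u) x = Comp C (Comp C s u') y"
      using eq hassoc[OF x1 u sh] hassoc[OF y1 u' sh] by simp
    then show "initial C X" using D_use[OF d] x1 y1 homD[OF su] homD[OF su'] by metis
  qed
qed

lemma disj_self: assumes d: "disjoint C a a" shows "initial C (Dom C a)"
proof -
  have a: "a \<in> Mor C" using disj_mor[OF d] by blast
  have "Id C (Dom C a) \<in> hom C (Dom C a) (Dom C a)" using hid dc[OF a] by blast
  then show ?thesis using D_use[OF d] by blast
qed


section \<open>Families as sets\<close>

definition pf :: "'o \<Rightarrow> 'm set \<Rightarrow> bool" where
  "pf X U \<longleftrightarrow> finite U \<and> (\<forall>u\<in>U. u \<in> Mor C \<and> Cod C u = X) \<and> gen_sieve C U \<in> J X \<and>
     (\<forall>u\<in>U. \<forall>v\<in>U. u \<noteq> v \<longrightarrow> disjoint C u v)"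

definition refS :: "'m set \<Rightarrow> 'm set \<Rightarrow> bool" where
  "refS V F \<longleftrightarrow> (\<forall>v\<in>V. \<exists>m\<in>F. \<exists>u. u \<in> hom C (Dom C v) (Dom C m) \<and> v = Comp C m u)"

lemma pf_mem: assumes p: "pf X U" and u: "u \<in> U" shows "u \<in> hom C (Dom C u) X"
proof -
  have "\<forall>u\<in>U. u \<in> Mor C \<and> Cod C u = X" using p unfolding pf_def by blast
  then show ?thesis using u unfolding hom_def by blast
qed

lemma pf_dis: assumes p: "pf X U" and u: "u \<in> U" and v: "v \<in> U" and uv: "u \<noteq> v" shows "disjoint C u v"
proof -
  have "\<forall>u\<in>U. \<forall>v\<in>U. u \<noteq> v \<longrightarrow> disjoint C u v" using p unfolding pf_def by blast
  then show ?thesis using u v uv by blast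
qed

lemma pf_cov: assumes p: "pf X U" shows "gen_sieve C U \<in> J X" "finite U"
  using p unfolding pf_def by blast+

lemma fdcf_pf: assumes a: "fdcf C J X I f" shows "pf X (f ` I)"
proof -
  have a1: "finite I" "\<forall>i\<in>I. f i \<in> Mor C \<and> Cod C (f i) = X" "gen_sieve C (f ` I) \<in> J X"
    "\<forall>i\<in>I. \<forall>j\<in>I. i \<noteq> j \<longrightarrow> disjoint C (f i) (f j)"
    using a unfolding fdcf_def covering_family_def by blast+
  have "\<forall>u\<in>f ` I. \<forall>v\<in>f ` I. u \<noteq> v \<longrightarrow> disjoint C u v"
  proof (intro ballI impI)
    fix u v assume "u \<in> f ` I" "v \<in> f ` I" "u \<noteq> v"
    then obtain i j where "i \<in> I" "j \<in> I" "u = f i" "v = f j" "i \<noteq> j" by blast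
    then show "disjoint C u v" using a1(4) by blast
  qed
  then show ?thesis unfolding pf_def using a1 by blast
qed

lemma pf_fdcf: assumes p: "pf X U" shows "\<exists>(K::nat set) h. fdcf C J X K h \<and> h ` K = U"
proof -
  have fin: "finite U" using p unfolding pf_def by blast
  obtain h where h: "bij_betw h {0..<card U} U" using ex_bij_betw_nat_finite[OF fin] by blast
  have im: "h ` {0..<card U} = U" using h unfolding bij_betw_def by blast
  have inj: "inj_on h {0..<card U}" using h unfolding bij_betw_def by blast
  have "fdcf C J X {0..<card U} h"
    unfolding fdcf_def covering_family_def
  proof (intro conjI ballI impI)
    show "finite {0..<card U}" by simp
  next
    fix i assume "i \<in> {0..<card U}"
    then have "h i \<in> U" using im by blast
    then show "h i \<in> Mor C" "Cod C (h i) = X" using p unfolding pf_def by blast+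
  next
    show "gen_sieve C (h ` {0..<card U}) \<in> J X" using im p unfolding pf_def by simp
  next
    fix i j assume i: "i \<in> {0..<card U}" and j: "j \<in> {0..<card U}" and ij: "i \<noteq> j"
    have "h i \<noteq> h j" using inj i j ij unfolding inj_on_def by blast
    moreover have "h i \<in> U" "h j \<in> U" using im i j by blast+
    ultimately show "disjoint C (h i) (h j)" using p unfolding pf_def by blast
  qed
  then show ?thesis using im by blast
qed

lemma refines_refS: assumes r: "refines C K h I f" and fM: "\<forall>i\<in>I. f i \<in> Mor C"
  shows "refS (h ` K) (f ` I)"
  unfolding refS_def
proof
  fix v assume "v \<in> h ` K"
  then obtain k where k: "k \<in> K" "v = h k" by blast
  obtain i u where iu: "i \<in> I" "u \<in> Mor C" "Cod C u = Dom C (f i)" "h k = Comp C (f i) u"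
    using r k(1) unfolding refines_def by blast
  have uh: "u \<in> hom C (Dom C u) (Dom C (f i))" using iu unfolding hom_def by blast
  have "Comp C (f i) u \<in> hom C (Dom C u) (Cod C (f i))" using hcomp[OF uh homI] fM iu(1) by blast
  then have "Dom C v = Dom C u" using homD k(2) iu(4) by metis
  then show "\<exists>m\<in>f ` I. \<exists>u. u \<in> hom C (Dom C v) (Dom C m) \<and> v = Comp C m u"
    using uh iu k by auto
qed

lemma refS_trans: assumes a: "refS V W" and b: "refS W F" and FM: "F \<subseteq> Mor C"
  shows "refS V F"
  unfolding refS_def
proof
  fix v assume v: "v \<in> V"
  obtain w u where wu: "w \<in> W" "u \<in> hom C (Dom C v) (Dom C w)" "v = Comp C w u"
    using a v unfolding refS_def by blast
  obtain m u' where mu: "m \<in> F" "u' \<in> hom C (Dom C w) (Dom C m)" "w = Comp C m u'"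
    using b wu(1) unfolding refS_def by blast
  have mh: "m \<in> hom C (Dom C m) (Cod C m)" using homI FM mu(1) by blast
  have "v = Comp C m (Comp C u' u)" using hassoc[OF wu(2) mu(2) mh] wu(3) mu(3) by simp
  moreover have "Comp C u' u \<in> hom C (Dom C v) (Dom C m)" using hcomp[OF wu(2) mu(2)] .
  ultimately show "\<exists>m\<in>F. \<exists>u. u \<in> hom C (Dom C v) (Dom C m) \<and> v = Comp C m u" using mu(1) by blast
qed

lemma axR: "\<forall>B \<in> Ob C. \<forall>(I1 :: nat set) f1 (I2 :: nat set) f2.
        fdcf C J B I1 f1 \<longrightarrow> fdcf C J B I2 f2 \<longrightarrow>
        (\<exists>(K :: nat set) h. fdcf C J B K h \<and> refines C K h I1 f1 \<and> refines C K h I2 f2)"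
  using ca unfolding closed_assembler_def assembler_def by (elim conjE)

lemma R_set: assumes X: "X \<in> Ob C" and p1: "pf X U1" and p2: "pf X U2"
  shows "\<exists>V. pf X V \<and> refS V U1 \<and> refS V U2"
proof -
  obtain K1 :: "nat set" and h1 where h1: "fdcf C J X K1 h1" "h1 ` K1 = U1" using pf_fdcf[OF p1] by blast
  obtain K2 :: "nat set" and h2 where h2: "fdcf C J X K2 h2" "h2 ` K2 = U2" using pf_fdcf[OF p2] by blast
  obtain K :: "nat set" and h where h: "fdcf C J X K h" "refines C K h K1 h1" "refines C K h K2 h2"
    using axR X h1(1) h2(1) by blast
  have m1: "\<forall>i\<in>K1. h1 i \<in> Mor C" using h1(1) unfolding fdcf_def covering_family_def by blast
  have m2: "\<forall>i\<in>K2. h2 i \<in> Mor C" using h2(1) unfolding fdcf_def covering_family_def by blast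
  show ?thesis using fdcf_pf[OF h(1)] refines_refS[OF h(2) m1] refines_refS[OF h(3) m2] h1(2) h2(2) by blast
qed

lemma pf_id: assumes X: "X \<in> Ob C" shows "pf X {Id C X}"
proof -
  have i: "Id C X \<in> hom C X X" using hid[OF X] .
  have sv: "sieve_on C X (gen_sieve C {Id C X})"
    by (rule gen_sieve_sieve) (use homD[OF i] in auto)
  have "max_sieve C X \<subseteq> gen_sieve C {Id C X}"
  proof
    fix g assume "g \<in> max_sieve C X"
    then have g: "g \<in> hom C (Dom C g) X" unfolding max_sieve_def hom_def by blast
    have "Comp C (Id C X) g \<in> gen_sieve C {Id C X}" using gen_memh[of "Id C X" "{Id C X}" g] g homD[OF i] by simp
    then show "g \<in> gen_sieve C {Id C X}" using hidl[OF g] by simp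
  qed
  then have "gen_sieve C {Id C X} \<in> J X" using up[OF X gt2[OF X] sv] by blast
  then show ?thesis unfolding pf_def using homD[OF i] by simp
qed

lemma refS_refl: "V \<subseteq> Mor C \<Longrightarrow> refS V V"
  unfolding refS_def
proof
  fix v assume V: "V \<subseteq> Mor C" and v: "v \<in> V"
  have vM: "v \<in> Mor C" using V v by blast
  have "Id C (Dom C v) \<in> hom C (Dom C v) (Dom C v)" using hid dc[OF vM] by blast
  then show "\<exists>m\<in>V. \<exists>u. u \<in> hom C (Dom C v) (Dom C m) \<and> v = Comp C m u" using v idr[OF vM] by metis
qed

lemma common_ref: assumes X: "X \<in> Ob C" and fin: "finite Fs" and all: "\<forall>F\<in>Fs. pf X F"
  shows "\<exists>V. pf X V \<and> (\<forall>F\<in>Fs. refS V F)"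
  using fin all
proof (induction Fs rule: finite_induct)
  case empty
  then show ?case using pf_id[OF X] by blast
next
  case (insert F Fs)
  obtain V where V: "pf X V" "\<forall>F\<in>Fs. refS V F" using insert by blast
  obtain V' where V': "pf X V'" "refS V' V" "refS V' F" using R_set[OF X V(1)] insert(4) by blast
  have VM: "V \<subseteq> Mor C" using V(1) unfolding pf_def by blast
  have "\<forall>G\<in>Fs. refS V' G"
  proof
    fix G assume G: "G \<in> Fs"
    have "G \<subseteq> Mor C" using insert(4) G unfolding pf_def by blast
    then show "refS V' G" using refS_trans[OF V'(2)] V(2) G by blast
  qed
  then show ?case using V' by blast
qed


lemma pb_facts: assumes "is_pullback C a b P p q"
  shows "p \<in> hom C P (Dom C a) \<and> q \<in> hom C P (Dom C b) \<and> Comp C a p = Comp C b q"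
  using assms unfolding is_pullback_def by blast

lemma pb_univ: assumes "is_pullback C a b P p q" and "x \<in> hom C W (Dom C a)" and "y \<in> hom C W (Dom C b)"
  and "Comp C a x = Comp C b y"
  shows "\<exists>u. u \<in> hom C W P \<and> Comp C p u = x \<and> Comp C q u = y"
proof -
  have "\<exists>!u. u \<in> hom C W P \<and> Comp C p u = x \<and> Comp C q u = y"
    using assms unfolding is_pullback_def by blast
  then show ?thesis by blast
qed

end

locale M = CA C J for C :: "('o, 'm) cat" and J +
  fixes D :: "'o set" and I :: "'i set" and A :: "'i \<Rightarrow> 'o" and f :: "'i \<Rightarrow> 'm" and B :: 'o
  assumes sv: "is_sieve C D"
  and cmpl: "\<forall>X \<in> D. has_complements_for C J X"
  and WA: "W_obj C I A"
  and fh: "\<forall>i\<in>I. f i \<in> hom C (A i) B"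
  and pbD: "\<forall>i\<in>I. \<forall>i'\<in>I. i \<noteq> i' \<longrightarrow> (\<exists>P p q. is_pullback C (f i) (f i') P p q \<and> P \<in> D)"
begin

definition U :: "'i \<Rightarrow> 'm set \<Rightarrow> 'm set" where
  "U i S = {u. u \<in> hom C (Dom C u) (A i) \<and> Comp C (f i) u \<in> S}"

definition inv :: "'i set \<Rightarrow> 'm set \<Rightarrow> bool" where
  "inv I' S \<longleftrightarrow> finite S \<and>
    (\<forall>s\<in>S. s \<in> hom C (Dom C s) B \<and> \<not> initial C (Dom C s) \<and>
       (\<exists>i\<in>I'. \<exists>u. u \<in> hom C (Dom C s) (A i) \<and> s = Comp C (f i) u)) \<and>
    (\<forall>s\<in>S. \<forall>t\<in>S. s \<noteq> t \<longrightarrow> disjoint C s t) \<and>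
    (\<forall>i\<in>I'. gen_sieve C (U i S) \<in> J (A i))"

lemma cmpl_set: assumes X: "X \<in> D" and m: "m \<in> hom C X Y" shows "\<exists>F. pf Y F \<and> m \<in> F"
proof -
  have "has_complements_for C J X" using cmpl X by blast
  moreover have "m \<in> Mor C" "Dom C m = X" "Cod C m = Y" using homD[OF m] by blast+
  ultimately obtain K :: "nat set" and h where h: "fdcf C J Y K h" "\<exists>i\<in>K. h i = m"
    unfolding has_complements_for_def by metis
  then show ?thesis using fdcf_pf[OF h(1)] by blast
qed

lemma U_mem: "u \<in> U i S \<longleftrightarrow> u \<in> hom C (Dom C u) (A i) \<and> Comp C (f i) u \<in> S"
  unfolding U_def by simp

lemma U_sub: assumes i: "i \<in> I" shows "U i S \<subseteq> Mor C" "\<And>u. u \<in> U i S \<Longrightarrow> Cod C u = A i"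
  unfolding U_def hom_def by blast+

lemma U_inj: assumes i: "i \<in> I" and u: "u \<in> U i S" and v: "v \<in> U i S" and e: "Comp C (f i) u = Comp C (f i) v"
  shows "u = v"
proof -
  have fi: "f i \<in> Mor C" "Dom C (f i) = A i" using fh i homD by blast+
  show ?thesis using hmono[OF fi(1)] u v e fi(2) unfolding U_def by auto
qed

lemma U_finite: assumes i: "i \<in> I" and S: "finite S" shows "finite (U i S)"
proof -
  have "inj_on (Comp C (f i)) (U i S)" using U_inj[OF i] unfolding inj_on_def by blast
  moreover have "Comp C (f i) ` U i S \<subseteq> S" unfolding U_def by blast
  ultimately show ?thesis using S finite_imageD finite_subset by blast
qed

lemma U_disj: assumes i: "i \<in> I" and S: "\<forall>s\<in>S. \<forall>t\<in>S. s \<noteq> t \<longrightarrow> disjoint C s t"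
  and u: "u \<in> U i S" and v: "v \<in> U i S" and uv: "u \<noteq> v" shows "disjoint C u v"
proof -
  have fi: "f i \<in> Mor C" "Dom C (f i) = A i" using fh i homD by blast+
  have "Comp C (f i) u \<noteq> Comp C (f i) v" using U_inj[OF i u v] uv by blast
  then have "disjoint C (Comp C (f i) u) (Comp C (f i) v)" using S u v unfolding U_def by blast
  moreover have "u \<in> hom C (Dom C u) (Dom C (f i))" "v \<in> hom C (Dom C v) (Dom C (f i))"
    using u v fi(2) unfolding U_def by auto
  ultimately show ?thesis using disj_cancel fi(1) by blast
qed


lemma step:
  assumes I': "I' \<subseteq> I" and j: "j \<in> I" and jn: "j \<notin> I'" and iv: "inv I' S"
  shows "\<exists>S'. inv (insert j I') S'"
proof -
  have Sfin: "finite S" using iv unfolding inv_def by blast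
  have Sh: "\<And>s. s \<in> S \<Longrightarrow> s \<in> hom C (Dom C s) B" using iv unfolding inv_def by blast
  have Sni: "\<And>s. s \<in> S \<Longrightarrow> \<not> initial C (Dom C s)" using iv unfolding inv_def by blast
  have Sfac: "\<And>s. s \<in> S \<Longrightarrow> \<exists>i\<in>I'. \<exists>u. u \<in> hom C (Dom C s) (A i) \<and> s = Comp C (f i) u"
    using iv unfolding inv_def by blast
  have Sdis: "\<forall>s\<in>S. \<forall>t\<in>S. s \<noteq> t \<longrightarrow> disjoint C s t" using iv unfolding inv_def by blast
  have Scov: "\<And>i. i \<in> I' \<Longrightarrow> gen_sieve C (U i S) \<in> J (A i)" using iv unfolding inv_def by blast
  have fj: "f j \<in> hom C (A j) B" using fh j by blast
  have fjM: "f j \<in> Mor C" "Dom C (f j) = A j" "Cod C (f j) = B" using homD[OF fj] by blast+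
  have AjO: "A j \<in> Ob C" using hob[OF fj] by blast
  have exT: "\<forall>s\<in>S. \<exists>t. is_pullback C s (f j) (fst t) (fst (snd t)) (snd (snd t))"
  proof
    fix s assume s: "s \<in> S"
    have sM: "s \<in> Mor C" "Cod C s = B" using homD[OF Sh[OF s]] by blast+
    have "\<forall>f \<in> Mor C. \<forall>g \<in> Mor C. Cod C f = Cod C g \<longrightarrow> (\<exists>P p q. is_pullback C f g P p q)"
      using closed unfolding closed_cat_def .
    then have "\<exists>P p q. is_pullback C s (f j) P p q" using sM fjM by simp
    then show "\<exists>t. is_pullback C s (f j) (fst t) (fst (snd t)) (snd (snd t))" by auto
  qed
  obtain T where T: "\<forall>s\<in>S. is_pullback C s (f j) (fst (T s)) (fst (snd (T s))) (snd (snd (T s)))"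
    using bchoice[OF exT] by blast
  define Q where "Q s = fst (T s)" for s
  define q where "q s = fst (snd (T s))" for s
  define r where "r s = snd (snd (T s))" for s
  have PB: "\<And>s. s \<in> S \<Longrightarrow> is_pullback C s (f j) (Q s) (q s) (r s)" using T unfolding Q_def q_def r_def by blast
  have PBf: "\<And>s. s \<in> S \<Longrightarrow> q s \<in> hom C (Q s) (Dom C s) \<and> r s \<in> hom C (Q s) (Dom C (f j)) \<and> Comp C s (q s) = Comp C (f j) (r s)"
    by (rule pb_facts[OF PB])
  have qh: "\<And>s. s \<in> S \<Longrightarrow> q s \<in> hom C (Q s) (Dom C s)" using PBf by blast
  have rh: "\<And>s. s \<in> S \<Longrightarrow> r s \<in> hom C (Q s) (A j)" using PBf fjM(2) by simp
  have qr: "\<And>s. s \<in> S \<Longrightarrow> Comp C s (q s) = Comp C (f j) (r s)" using PBf by blast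
  have QD: "\<And>s. s \<in> S \<Longrightarrow> Q s \<in> D"
  proof -
    fix s assume s: "s \<in> S"
    obtain i u where iu: "i \<in> I'" "u \<in> hom C (Dom C s) (A i)" "s = Comp C (f i) u" using Sfac[OF s] by blast
    have i: "i \<in> I" "i \<noteq> j" using iu(1) I' jn by blast+
    obtain P p p' where P: "is_pullback C (f i) (f j) P p p'" "P \<in> D" using pbD i j by blast
    have fi: "f i \<in> hom C (A i) B" using fh i by blast
    have fiD: "Dom C (f i) = A i" using homD[OF fi] by blast
    have uq: "Comp C u (q s) \<in> hom C (Q s) (Dom C (f i))" using hcomp[OF qh[OF s] iu(2)] fiD by simp
    have rs: "r s \<in> hom C (Q s) (Dom C (f j))" using rh[OF s] fjM by simp
    have "Comp C (f i) (Comp C u (q s)) = Comp C s (q s)" using hassoc[OF qh[OF s] iu(2) fi] iu(3) by simp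
    then have "Comp C (f i) (Comp C u (q s)) = Comp C (f j) (r s)" using qr[OF s] by simp
    then obtain v where v: "v \<in> hom C (Q s) P" using pb_univ[OF P(1) uq rs] by blast
    have "\<forall>h \<in> Mor C. Cod C h \<in> D \<longrightarrow> Dom C h \<in> D" using sv unfolding is_sieve_def by blast
    moreover have vv: "v \<in> Mor C" "Dom C v = Q s" "Cod C v = P" using homD[OF v] by blast+
    ultimately show "Q s \<in> D" using P(2) by metis
  qed
  have exq: "\<forall>s\<in>S. \<exists>F. pf (Dom C s) F \<and> q s \<in> F"
  proof
    fix s assume s: "s \<in> S" show "\<exists>F. pf (Dom C s) F \<and> q s \<in> F" by (rule cmpl_set[OF QD[OF s] qh[OF s]])
  qed
  obtain Fq where Fq: "\<forall>s\<in>S. pf (Dom C s) (Fq s) \<and> q s \<in> Fq s" using bchoice[OF exq] by blast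
  have exr: "\<forall>s\<in>S. \<exists>F. pf (A j) F \<and> r s \<in> F"
  proof
    fix s assume s: "s \<in> S" show "\<exists>F. pf (A j) F \<and> r s \<in> F" by (rule cmpl_set[OF QD[OF s] rh[OF s]])
  qed
  obtain Fr where Fr: "\<forall>s\<in>S. pf (A j) (Fr s) \<and> r s \<in> Fr s" using bchoice[OF exr] by blast
  have "\<forall>F\<in>Fr ` S. pf (A j) F" using Fr by blast
  from common_ref[OF AjO finite_imageI[OF Sfin] this]
  obtain V where V: "pf (A j) V" "\<forall>F\<in>Fr ` S. refS V F" by blast
  define S1 where "S1 = {Comp C s c | s c. s \<in> S \<and> c \<in> Fq s \<and> \<not> initial C (Dom C c)}"
  define S2 where "S2 = {Comp C (f j) w | w. w \<in> V \<and> (\<forall>s\<in>S. disjoint C w (r s)) \<and> \<not> initial C (Dom C w)}"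
  define S' where "S' = S1 \<union> S2"
  have cFq: "\<And>s c. s \<in> S \<Longrightarrow> c \<in> Fq s \<Longrightarrow> c \<in> hom C (Dom C c) (Dom C s)"
    using Fq pf_mem by blast
  have wV: "\<And>w. w \<in> V \<Longrightarrow> w \<in> hom C (Dom C w) (A j)"
    using V(1) pf_mem by blast
  have sc_h: "\<And>s c. s \<in> S \<Longrightarrow> c \<in> Fq s \<Longrightarrow> Comp C s c \<in> hom C (Dom C c) B"
    using hcomp[OF cFq Sh] by blast
  have fw_h: "\<And>w. w \<in> V \<Longrightarrow> Comp C (f j) w \<in> hom C (Dom C w) B"
    using hcomp[OF wV fj] by blast
  have S1E: "\<And>x. x \<in> S1 \<Longrightarrow> \<exists>s c. x = Comp C s c \<and> s \<in> S \<and> c \<in> Fq s \<and> \<not> initial C (Dom C c)"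
    unfolding S1_def by blast
  have S2E: "\<And>x. x \<in> S2 \<Longrightarrow> \<exists>w. x = Comp C (f j) w \<and> w \<in> V \<and> (\<forall>s\<in>S. disjoint C w (r s)) \<and> \<not> initial C (Dom C w)"
    unfolding S2_def by blast
  have S1I: "\<And>s c. s \<in> S \<Longrightarrow> c \<in> Fq s \<Longrightarrow> \<not> initial C (Dom C c) \<Longrightarrow> Comp C s c \<in> S'"
    unfolding S'_def S1_def by blast
  have S2I: "\<And>w. w \<in> V \<Longrightarrow> (\<forall>s\<in>S. disjoint C w (r s)) \<Longrightarrow> \<not> initial C (Dom C w) \<Longrightarrow> Comp C (f j) w \<in> S'"
    unfolding S'_def S2_def by blast
  have finS': "finite S'"
  proof -
    have finFq: "\<forall>s\<in>S. finite (Fq s)" using Fq pf_cov by blast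
    have "S1 \<subseteq> (\<lambda>p. Comp C (fst p) (snd p)) ` (SIGMA s:S. Fq s)"
    proof
      fix x assume "x \<in> S1"
      then obtain s c where "x = Comp C s c" "s \<in> S" "c \<in> Fq s" using S1E by blast
      then show "x \<in> (\<lambda>p. Comp C (fst p) (snd p)) ` (SIGMA s:S. Fq s)" by force
    qed
    moreover have "finite (SIGMA s:S. Fq s)" using Sfin finFq by (simp add: finite_SigmaI)
    ultimately have f1: "finite S1" using finite_subset by blast
    have "S2 \<subseteq> Comp C (f j) ` V" using S2E by blast
    moreover have "finite V" using pf_cov[OF V(1)] by blast
    ultimately have "finite S2" using finite_subset by blast
    then show ?thesis using f1 unfolding S'_def by blast
  qed
  have elem: "x \<in> hom C (Dom C x) B \<and> \<not> initial C (Dom C x) \<and>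
       (\<exists>i\<in>insert j I'. \<exists>u. u \<in> hom C (Dom C x) (A i) \<and> x = Comp C (f i) u)" if x: "x \<in> S'" for x
  proof (cases "x \<in> S1")
    case True
    then obtain s c where sc: "x = Comp C s c" "s \<in> S" "c \<in> Fq s" "\<not> initial C (Dom C c)" using S1E by blast
    have xh: "x \<in> hom C (Dom C c) B" using sc_h[OF sc(2,3)] sc(1) by simp
    have dx: "Dom C x = Dom C c" using homD[OF xh] by blast
    obtain i u where iu: "i \<in> I'" "u \<in> hom C (Dom C s) (A i)" "s = Comp C (f i) u" using Sfac[OF sc(2)] by blast
    have fi: "f i \<in> hom C (A i) B" using fh I' iu(1) by blast
    have "x = Comp C (f i) (Comp C u c)" using hassoc[OF cFq[OF sc(2,3)] iu(2) fi] sc(1) iu(3) by simp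
    moreover have "Comp C u c \<in> hom C (Dom C c) (A i)" using hcomp[OF cFq[OF sc(2,3)] iu(2)] .
    ultimately show ?thesis using xh dx sc(4) iu(1) by auto
  next
    case False
    then have "x \<in> S2" using x unfolding S'_def by blast
    then obtain w where w: "x = Comp C (f j) w" "w \<in> V" "\<not> initial C (Dom C w)" using S2E by blast
    have xh: "x \<in> hom C (Dom C w) B" using fw_h[OF w(2)] w(1) by simp
    have dx: "Dom C x = Dom C w" using homD[OF xh] by blast
    show ?thesis using xh dx w wV[OF w(2)] by auto
  qed
  have X12: "disjoint C (Comp C s c) (Comp C (f j) w)"
    if s: "s \<in> S" and c: "c \<in> Fq s" and w: "w \<in> V" and dw: "disjoint C w (r s)" for s c w
  proof -
    have sch: "Comp C s c \<in> hom C (Dom C c) B" using sc_h[OF s c] .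
    have fwh: "Comp C (f j) w \<in> hom C (Dom C w) B" using fw_h[OF w] .
    show ?thesis
    proof (rule Dj)
      show "Comp C s c \<in> Mor C" "Comp C (f j) w \<in> Mor C" "Cod C (Comp C s c) = Cod C (Comp C (f j) w)"
        using homD[OF sch] homD[OF fwh] by simp_all
    next
      fix X x y assume x: "x \<in> hom C X (Dom C (Comp C s c))" and y: "y \<in> hom C X (Dom C (Comp C (f j) w))"
        and eq: "Comp C (Comp C s c) x = Comp C (Comp C (f j) w) y"
      have x1: "x \<in> hom C X (Dom C c)" using x homD[OF sch] by simp
      have y1: "y \<in> hom C X (Dom C w)" using y homD[OF fwh] by simp
      have cx: "Comp C c x \<in> hom C X (Dom C s)" using hcomp[OF x1 cFq[OF s c]] .
      have wy: "Comp C w y \<in> hom C X (A j)" using hcomp[OF y1 wV[OF w]] .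
      have "Comp C s (Comp C c x) = Comp C (f j) (Comp C w y)"
        using eq hassoc[OF x1 cFq[OF s c] Sh[OF s]] hassoc[OF y1 wV[OF w] fj] by simp
      moreover have wy': "Comp C w y \<in> hom C X (Dom C (f j))" using wy fjM by simp
      ultimately obtain t where t: "t \<in> hom C X (Q s)" "Comp C (q s) t = Comp C c x" "Comp C (r s) t = Comp C w y"
        using pb_univ[OF PB[OF s] cx wy'] by blast
      have wy2: "y \<in> hom C X (Dom C w)" using y1 .
      have t2: "t \<in> hom C X (Dom C (r s))" using t(1) homD[OF rh[OF s]] by simp
      show "initial C X" using D_use[OF dw wy2 t2] t(3) by simp
    qed
  qed
  have disS': "\<forall>x\<in>S'. \<forall>y\<in>S'. x \<noteq> y \<longrightarrow> disjoint C x y"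
  proof (intro ballI impI)
    fix x y assume x: "x \<in> S'" and y: "y \<in> S'" and xy: "x \<noteq> y"
    show "disjoint C x y"
    proof (cases "x \<in> S1")
      case x1: True
      then obtain s c where sc: "x = Comp C s c" "s \<in> S" "c \<in> Fq s" using S1E by blast
      show ?thesis
      proof (cases "y \<in> S1")
        case True
        then obtain s' c' where sc': "y = Comp C s' c'" "s' \<in> S" "c' \<in> Fq s'" using S1E by blast
        show ?thesis
        proof (cases "s = s'")
          case True
          then have cc: "c \<noteq> c'" using xy sc sc' by blast
          have "disjoint C c c'" using pf_dis[OF _ sc(3) _ cc] Fq sc(2) sc'(3) True by blast
          moreover have "Cod C c = Dom C s" using homD[OF cFq[OF sc(2,3)]] by blast
          moreover have "s \<in> Mor C" using homD[OF Sh[OF sc(2)]] by blast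
          ultimately show ?thesis using disj_post sc sc' True by blast
        next
          case False
          then have "disjoint C s s'" using Sdis sc(2) sc'(2) by blast
          then show ?thesis using disj_comp cFq[OF sc(2,3)] cFq[OF sc'(2,3)] sc(1) sc'(1) by blast
        qed
      next
        case False
        then have "y \<in> S2" using y unfolding S'_def by blast
        then obtain w where w: "y = Comp C (f j) w" "w \<in> V" "\<forall>s\<in>S. disjoint C w (r s)" using S2E by blast
        show ?thesis using X12[OF sc(2,3) w(2)] w(3) sc(2) sc(1) w(1) by blast
      qed
    next
      case False
      then have "x \<in> S2" using x unfolding S'_def by blast
      then obtain w where w: "x = Comp C (f j) w" "w \<in> V" "\<forall>s\<in>S. disjoint C w (r s)" using S2E by blast
      show ?thesis
      proof (cases "y \<in> S1")
        case True
        then obtain s c where sc: "y = Comp C s c" "s \<in> S" "c \<in> Fq s" using S1E by blast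
        show ?thesis using disj_sym[OF X12[OF sc(2,3) w(2)]] w(3) sc(2) sc(1) w(1) by blast
      next
        case False
        then have "y \<in> S2" using y unfolding S'_def by blast
        then obtain w' where w': "y = Comp C (f j) w'" "w' \<in> V" using S2E by blast
        have ww: "w \<noteq> w'" using xy w w' by blast
        have "disjoint C w w'" using pf_dis[OF V(1) w(2) w'(2) ww] .
        moreover have "Cod C w = Dom C (f j)" using homD[OF wV[OF w(2)]] fjM by simp
        ultimately show ?thesis using disj_post fjM(1) w(1) w'(1) by blast
      qed
    qed
  qed
  have covI: "gen_sieve C (U i S') \<in> J (A i)" if i: "i \<in> I'" for i
  proof -
    have iI: "i \<in> I" using i I' by blast
    have fi: "f i \<in> hom C (A i) B" using fh iI by blast
    have AiO: "A i \<in> Ob C" using hob[OF fi] by blast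
    let ?R = "gen_sieve C (U i S')"
    have Rsv: "sieve_on C (A i) ?R" by (rule gen_sieve_sieve[OF U_sub(1)[OF iI] U_sub(2)[OF iI]])
    show ?thesis
    proof (rule gt4[OF AiO Scov[OF i] Rsv])
      fix h assume h: "h \<in> gen_sieve C (U i S)"
      obtain u x where ux: "h = Comp C u x" "u \<in> U i S" "x \<in> hom C (Dom C x) (Dom C u)"
        using h by (rule gen_E)
      have uh: "u \<in> hom C (Dom C u) (A i)" and su: "Comp C (f i) u \<in> S" using ux(2) U_mem by blast+
      let ?s = "Comp C (f i) u"
      have sh: "?s \<in> hom C (Dom C u) B" using hcomp[OF uh fi] .
      have ds: "Dom C ?s = Dom C u" using homD[OF sh] by blast
      have uM: "u \<in> Mor C" "Cod C u = A i" using homD[OF uh] by blast+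
      have DuO: "Dom C u \<in> Ob C" using hob[OF uh] by blast
      have PU: "pullback_sieve C u ?R \<in> J (Dom C u)"
      proof (rule L1[OF DuO])
        show "gen_sieve C (Fq ?s) \<in> J (Dom C u)" using pf_cov(1) Fq su ds by metis
        show "sieve_on C (Dom C u) (pullback_sieve C u ?R)" by (rule pbs_sieve[OF Rsv uM])
      next
        fix h' assume h': "h' \<in> gen_sieve C (Fq ?s)"
        obtain c y where cy: "h' = Comp C c y" "c \<in> Fq ?s" "y \<in> hom C (Dom C y) (Dom C c)"
          using h' by (rule gen_E)
        have ch: "c \<in> hom C (Dom C c) (Dom C u)" using cFq[OF su cy(2)] ds by simp
        have hh: "h' \<in> hom C (Dom C y) (Dom C u)" using hcomp[OF cy(3) ch] cy(1) by simp
        show "h' \<in> pullback_sieve C u ?R \<or> initial C (Dom C h')"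
        proof (cases "initial C (Dom C c)")
          case True
          then have "initial C (Dom C y)" using init_dom homD[OF cy(3)] by metis
          then show ?thesis using homD[OF hh] by simp
        next
          case False
          then have scS: "Comp C ?s c \<in> S'" using S1I[OF su cy(2)] by blast
          have uc: "Comp C u c \<in> hom C (Dom C c) (A i)" using hcomp[OF ch uh] .
          have "Comp C (f i) (Comp C u c) = Comp C ?s c" using hassoc[OF ch uh fi] .
          then have "Comp C u c \<in> U i S'" using scS uc homD[OF uc] U_mem by simp
          then have "Comp C (Comp C u c) y \<in> ?R" using gen_memh cy(3) homD[OF uc] by metis
          moreover have "Comp C u h' = Comp C (Comp C u c) y" using hassoc[OF cy(3) ch uh] cy(1) by simp
          ultimately have "Comp C u h' \<in> ?R" by simp
          then show ?thesis using pbs_mem homD[OF hh] by blast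
        qed
      qed
      have xM: "x \<in> Mor C" "Cod C x = Dom C u" using homD[OF ux(3)] by blast+
      have "pullback_sieve C x (pullback_sieve C u ?R) \<in> J (Dom C x)"
        by (rule gt3[OF DuO PU xM])
      moreover have "pullback_sieve C h ?R = pullback_sieve C x (pullback_sieve C u ?R)"
        using pbs_comp[OF uM(1) xM] ux(1) by simp
      moreover have "Dom C h = Dom C x" using hcomp[OF ux(3) uh] ux(1) homD by metis
      ultimately show "pullback_sieve C h ?R \<in> J (Dom C h)" by simp
    qed
  qed
  have dich: "(\<exists>s\<in>S. \<exists>y. y \<in> hom C (Dom C w) (Q s) \<and> w = Comp C (r s) y) \<or> (\<forall>s\<in>S. disjoint C w (r s))"
    if w: "w \<in> V" for w
  proof (cases "\<exists>s\<in>S. \<exists>y. y \<in> hom C (Dom C w) (Q s) \<and> w = Comp C (r s) y")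
    case True then show ?thesis by blast
  next
    case False
    have "disjoint C w (r s)" if s: "s \<in> S" for s
    proof -
      have "refS V (Fr s)" using V(2) s by blast
      then obtain m y where my: "m \<in> Fr s" "y \<in> hom C (Dom C w) (Dom C m)" "w = Comp C m y"
        using w unfolding refS_def by blast
      have "m \<noteq> r s"
      proof
        assume "m = r s"
        then have "y \<in> hom C (Dom C w) (Q s)" using my(2) homD[OF rh[OF s]] by simp
        then show False using False my(3) s \<open>m = r s\<close> by blast
      qed
      then have "disjoint C m (r s)" using pf_dis Fr s my(1) by blast
      moreover have "Id C (Q s) \<in> hom C (Q s) (Dom C (r s))" using hid hob[OF rh[OF s]] homD[OF rh[OF s]] by metis
      ultimately have "disjoint C (Comp C m y) (Comp C (r s) (Id C (Q s)))" using disj_comp my(2) by blast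
      then show ?thesis using my(3) hidr[OF rh[OF s]] by simp
    qed
    then show ?thesis by blast
  qed
  have covJ: "gen_sieve C (U j S') \<in> J (A j)"
  proof -
    let ?R = "gen_sieve C (U j S')"
    have Rsv: "sieve_on C (A j) ?R" by (rule gen_sieve_sieve[OF U_sub(1)[OF j] U_sub(2)[OF j]])
    show ?thesis
    proof (rule L1[OF AjO pf_cov(1)[OF V(1)] Rsv])
      fix h assume h: "h \<in> gen_sieve C V"
      obtain w x where wx: "h = Comp C w x" "w \<in> V" "x \<in> hom C (Dom C x) (Dom C w)"
        using h by (rule gen_E)
      have hh: "h \<in> hom C (Dom C x) (A j)" using hcomp[OF wx(3) wV[OF wx(2)]] wx(1) by simp
      have dh: "Dom C h = Dom C x" using homD[OF hh] by blast
      show "h \<in> ?R \<or> initial C (Dom C h)"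
      proof (cases "\<exists>s\<in>S. \<exists>y. y \<in> hom C (Dom C w) (Q s) \<and> w = Comp C (r s) y")
        case True
        then obtain s y where sy: "s \<in> S" "y \<in> hom C (Dom C w) (Q s)" "w = Comp C (r s) y" by blast
        have yx: "Comp C y x \<in> hom C (Dom C x) (Q s)" using hcomp[OF wx(3) sy(2)] .
        show ?thesis
        proof (cases "initial C (Q s)")
          case True
          then have "initial C (Dom C x)" using init_dom homD[OF yx] by metis
          then show ?thesis using dh by simp
        next
          case False
          have "q s \<in> Fq s" using Fq sy(1) by blast
          moreover have "Dom C (q s) = Q s" using homD[OF qh[OF sy(1)]] by blast
          ultimately have "Comp C s (q s) \<in> S'" using S1I[OF sy(1)] False by metis
          then have "Comp C (f j) (r s) \<in> S'" using qr[OF sy(1)] by simp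
          moreover have "r s \<in> hom C (Dom C (r s)) (A j)" using rh[OF sy(1)] homD[OF rh[OF sy(1)]] by simp
          ultimately have rU: "r s \<in> U j S'" using U_mem by blast
          have "h = Comp C (r s) (Comp C y x)" using hassoc[OF wx(3) sy(2) rh[OF sy(1)]] wx(1) sy(3) by simp
          moreover have "Comp C y x \<in> hom C (Dom C x) (Dom C (r s))" using yx homD[OF rh[OF sy(1)]] by simp
          ultimately show ?thesis using gen_memh[OF rU] by metis
        qed
      next
        case False
        then have dw: "\<forall>s\<in>S. disjoint C w (r s)" using dich[OF wx(2)] by blast
        show ?thesis
        proof (cases "initial C (Dom C w)")
          case True
          then have "initial C (Dom C x)" using init_dom homD[OF wx(3)] by metis
          then show ?thesis using dh by simp
        next
          case False
          then have "Comp C (f j) w \<in> S'" using S2I[OF wx(2) dw] by blast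
          then have "w \<in> U j S'" using wV[OF wx(2)] U_mem by blast
          then show ?thesis using gen_memh wx(1) wx(3) by blast
        qed
      qed
    qed
  qed
  have "inv (insert j I') S'"
    unfolding inv_def using finS' elem disS' covI covJ by blast
  then show ?thesis by blast
qed

lemma ex_inv: "\<exists>S. inv I S"
proof -
  have finI: "finite I" using WA unfolding W_obj_def by blast
  have "\<exists>S. inv I S" using finI subset_refl
  proof (induction I rule: finite_subset_induct')
    case empty
    have "inv {} {}" unfolding inv_def by simp
    then show ?case by blast
  next
    case (insert a F)
    then obtain S where "inv F S" by blast
    then show ?case using step insert by blast
  qed
  then show ?thesis .
qed

lemma main: "\<exists>(K :: nat set) Z g gm. W_hom C J K Z I A g gm \<and>
           (\<forall>k \<in> K. \<forall>k' \<in> K. k \<noteq> k' \<longrightarrow>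
              (Comp C (f (g k)) (gm k) = Comp C (f (g k')) (gm k') \<or>
               disjoint C (Comp C (f (g k)) (gm k)) (Comp C (f (g k')) (gm k'))) \<and>
              (Comp C (f (g k)) (gm k) = Comp C (f (g k')) (gm k') \<longrightarrow> g k \<noteq> g k'))"
proof -
  obtain S where iv: "inv I S" using ex_inv by blast
  have Sfin: "finite S" using iv unfolding inv_def by blast
  have Sni: "\<And>s. s \<in> S \<Longrightarrow> \<not> initial C (Dom C s)" using iv unfolding inv_def by blast
  have Sdis: "\<forall>s\<in>S. \<forall>t\<in>S. s \<noteq> t \<longrightarrow> disjoint C s t" using iv unfolding inv_def by blast
  have Scov: "\<And>i. i \<in> I \<Longrightarrow> gen_sieve C (U i S) \<in> J (A i)" using iv unfolding inv_def by blast
  have finI: "finite I" using WA unfolding W_obj_def by blast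
  define T where "T = (SIGMA i:I. U i S)"
  have finT: "finite T" unfolding T_def using finI U_finite[OF _ Sfin] by (simp add: finite_SigmaI)
  obtain e where e: "bij_betw e {0..<card T} T" using ex_bij_betw_nat_finite[OF finT] by blast
  define K :: "nat set" where "K = {0..<card T}"
  define g where "g k = fst (e k)" for k
  define gm where "gm k = snd (e k)" for k
  define Z where "Z k = Dom C (gm k)" for k
  have eT: "\<And>k. k \<in> K \<Longrightarrow> g k \<in> I \<and> gm k \<in> U (g k) S"
  proof -
    fix k assume "k \<in> K"
    then have "e k \<in> T" using e unfolding K_def bij_betw_def by blast
    then have "(fst (e k), snd (e k)) \<in> (SIGMA i:I. U i S)" unfolding T_def by simp
    then show "g k \<in> I \<and> gm k \<in> U (g k) S" unfolding g_def gm_def by (rule SigmaE2) simp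
  qed
  have einj: "\<And>k k'. k \<in> K \<Longrightarrow> k' \<in> K \<Longrightarrow> g k = g k' \<Longrightarrow> gm k = gm k' \<Longrightarrow> k = k'"
  proof -
    fix k k' assume k: "k \<in> K" "k' \<in> K" "g k = g k'" "gm k = gm k'"
    then have "e k = e k'" unfolding g_def gm_def by (simp add: prod_eq_iff)
    moreover have "inj_on e K" using e unfolding bij_betw_def K_def by blast
    ultimately show "k = k'" using k(1,2) unfolding inj_on_def by blast
  qed
  have esurj: "\<And>i u. i \<in> I \<Longrightarrow> u \<in> U i S \<Longrightarrow> \<exists>k\<in>K. g k = i \<and> gm k = u"
  proof -
    fix i u assume iu: "i \<in> I" "u \<in> U i S"
    then have "(i, u) \<in> T" unfolding T_def by simp
    moreover have "e ` K = T" using e unfolding bij_betw_def K_def by blast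
    ultimately have "(i, u) \<in> e ` K" by simp
    then obtain k where k: "k \<in> K" "(i, u) = e k" by (rule imageE)
    then have "g k = i" "gm k = u" unfolding g_def gm_def by (metis fst_conv, metis snd_conv)
    then show "\<exists>k\<in>K. g k = i \<and> gm k = u" using k(1) by blast
  qed
  have gmh: "\<And>k. k \<in> K \<Longrightarrow> gm k \<in> hom C (Z k) (A (g k)) \<and> Comp C (f (g k)) (gm k) \<in> S"
  proof -
    fix k assume k: "k \<in> K"
    have "gm k \<in> U (g k) S" using eT[OF k] by blast
    then have "gm k \<in> hom C (Dom C (gm k)) (A (g k)) \<and> Comp C (f (g k)) (gm k) \<in> S" by (simp only: U_mem)
    then show "gm k \<in> hom C (Z k) (A (g k)) \<and> Comp C (f (g k)) (gm k) \<in> S" unfolding Z_def .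
  qed
  have Zni: "\<And>k. k \<in> K \<Longrightarrow> Z k \<in> Ob C \<and> \<not> initial C (Z k)"
  proof -
    fix k assume k: "k \<in> K"
    have fk: "f (g k) \<in> hom C (A (g k)) B" using fh eT[OF k] by blast
    have gk: "gm k \<in> hom C (Z k) (A (g k))" using gmh[OF k] by blast
    have "Comp C (f (g k)) (gm k) \<in> hom C (Z k) B" using hcomp[OF gk fk] .
    then have "Dom C (Comp C (f (g k)) (gm k)) = Z k" using homD by blast
    moreover have "\<not> initial C (Dom C (Comp C (f (g k)) (gm k)))" using Sni gmh[OF k] by blast
    moreover have "Z k \<in> Ob C" using hob[OF gk] by blast
    ultimately show "Z k \<in> Ob C \<and> \<not> initial C (Z k)" by simp
  qed
  have W1: "W_obj C K Z" unfolding W_obj_def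
  proof (intro conjI ballI)
    show "finite K" unfolding K_def by simp
  next
    fix k assume k: "k \<in> K"
    show "Z k \<in> Ob C" using Zni[OF k] by blast
    show "\<not> initial C (Z k)" using Zni[OF k] by blast
  qed
  have W3: "\<forall>k\<in>K. g k \<in> I \<and> gm k \<in> hom C (Z k) (A (g k))"
  proof
    fix k assume k: "k \<in> K"
    show "g k \<in> I \<and> gm k \<in> hom C (Z k) (A (g k))" using eT[OF k] gmh[OF k] by blast
  qed
  have W4: "fdcf C J (A i) {k \<in> K. g k = i} gm" if i: "i \<in> I" for i
  proof -
    have img: "gm ` {k \<in> K. g k = i} = U i S"
    proof
      show "gm ` {k \<in> K. g k = i} \<subseteq> U i S"
      proof
        fix u assume "u \<in> gm ` {k \<in> K. g k = i}"
        then obtain k where k: "k \<in> K" "g k = i" "u = gm k" by blast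
        have "gm k \<in> U (g k) S" using eT[OF k(1)] by blast
        then show "u \<in> U i S" using k(2,3) by simp
      qed
      show "U i S \<subseteq> gm ` {k \<in> K. g k = i}"
      proof
        fix u assume "u \<in> U i S"
        then obtain k where "k \<in> K" "g k = i" "gm k = u" using esurj[OF i] by blast
        then show "u \<in> gm ` {k \<in> K. g k = i}" by blast
      qed
    qed
    have c1: "\<forall>k\<in>{k \<in> K. g k = i}. gm k \<in> Mor C \<and> Cod C (gm k) = A i"
    proof
      fix k assume "k \<in> {k \<in> K. g k = i}"
      then have k: "k \<in> K" "g k = i" by blast+
      have "gm k \<in> hom C (Z k) (A (g k))" using gmh[OF k(1)] by blast
      then show "gm k \<in> Mor C \<and> Cod C (gm k) = A i" using homD k(2) by blast
    qed
    have c2: "gen_sieve C (gm ` {k \<in> K. g k = i}) \<in> J (A i)" using img Scov[OF i] by simp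
    have c3: "\<forall>k\<in>{k \<in> K. g k = i}. \<forall>k'\<in>{k \<in> K. g k = i}. k \<noteq> k' \<longrightarrow> disjoint C (gm k) (gm k')"
    proof (intro ballI impI)
      fix k k' assume k: "k \<in> {k \<in> K. g k = i}" and k': "k' \<in> {k \<in> K. g k = i}" and kk: "k \<noteq> k'"
      have kk1: "k \<in> K" "g k = i" "k' \<in> K" "g k' = i" using k k' by blast+
      have "gm k \<noteq> gm k'"
      proof
        assume "gm k = gm k'"
        then have "k = k'" using einj[OF kk1(1) kk1(3)] kk1(2,4) by simp
        then show False using kk by blast
      qed
      moreover have "gm k \<in> U i S" "gm k' \<in> U i S" using eT[OF kk1(1)] eT[OF kk1(3)] kk1(2,4) by simp_all
      ultimately show "disjoint C (gm k) (gm k')" using U_disj[OF i Sdis] by blast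
    qed
    have c0: "finite {k \<in> K. g k = i}" unfolding K_def by simp
    show ?thesis unfolding fdcf_def covering_family_def using c0 c1 c2 c3 by blast
  qed
  have W: "W_hom C J K Z I A g gm"
    unfolding W_hom_def using W1 WA W3 W4 by blast
  have P: "\<forall>k \<in> K. \<forall>k' \<in> K. k \<noteq> k' \<longrightarrow>
              (Comp C (f (g k)) (gm k) = Comp C (f (g k')) (gm k') \<or>
               disjoint C (Comp C (f (g k)) (gm k)) (Comp C (f (g k')) (gm k'))) \<and>
              (Comp C (f (g k)) (gm k) = Comp C (f (g k')) (gm k') \<longrightarrow> g k \<noteq> g k')"
  proof (intro ballI impI conjI)
    fix k k' assume k: "k \<in> K" and k': "k' \<in> K" and kk: "k \<noteq> k'"
    show "Comp C (f (g k)) (gm k) = Comp C (f (g k')) (gm k') \<or>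
               disjoint C (Comp C (f (g k)) (gm k)) (Comp C (f (g k')) (gm k'))"
    proof (cases "Comp C (f (g k)) (gm k) = Comp C (f (g k')) (gm k')")
      case False
      moreover have "Comp C (f (g k)) (gm k) \<in> S" "Comp C (f (g k')) (gm k') \<in> S" using gmh[OF k] gmh[OF k'] by blast+
      ultimately show ?thesis using Sdis by blast
    qed simp
  next
    fix k k' assume k: "k \<in> K" and k': "k' \<in> K" and kk: "k \<noteq> k'"
      and eq: "Comp C (f (g k)) (gm k) = Comp C (f (g k')) (gm k')"
    show "g k \<noteq> g k'"
    proof
      assume gg: "g k = g k'"
      have "gm k \<in> U (g k) S" using eT[OF k] by blast
      moreover have "gm k' \<in> U (g k') S" using eT[OF k'] by blast
      then have "gm k' \<in> U (g k) S" using gg by simp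
      moreover have "Comp C (f (g k)) (gm k) = Comp C (f (g k)) (gm k')" using eq gg by simp
      ultimately have "gm k = gm k'" using U_inj[OF conjunct1[OF eT[OF k]]] by blast
      then show False using einj[OF k k' gg] kk by blast
    qed
  qed
  show ?thesis using W P by blast
qed
end

theorem lemma5p12:
  fixes C :: "('o, 'm) cat" and J JD :: "'o \<Rightarrow> 'm set set" and D :: "'o set"
    and I :: "'i set" and A :: "'i \<Rightarrow> 'o" and f :: "'i \<Rightarrow> 'm" and B :: 'o
  assumes "closed_assembler C J"
    and "subassembler C J D JD"
    and "is_sieve C D"
    and "\<forall>X \<in> D. has_complements_for C J X"
    and "W_obj C I A"
    and "\<forall>i \<in> I. f i \<in> hom C (A i) B"
    and "\<forall>i \<in> I. \<forall>i' \<in> I. i \<noteq> i' \<longrightarrow>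
           (\<exists>P p q. is_pullback C (f i) (f i') P p q \<and> P \<in> D)"
  shows "\<exists>(K :: nat set) Z g gm. W_hom C J K Z I A g gm \<and>
           (\<forall>k \<in> K. \<forall>k' \<in> K. k \<noteq> k' \<longrightarrow>
              (Comp C (f (g k)) (gm k) = Comp C (f (g k')) (gm k') \<or>
               disjoint C (Comp C (f (g k)) (gm k)) (Comp C (f (g k')) (gm k'))) \<and>
              (Comp C (f (g k)) (gm k) = Comp C (f (g k')) (gm k') \<longrightarrow> g k \<noteq> g k'))"
proof -
  have "M C J D I A f B"
    unfolding M_def M_axioms_def CA_def using assms by blast
  then show ?thesis by (rule M.main)
qed

end
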